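(* Let $T>0$. The following are equivalent: (i) for every $(u_0,v_0)\in(H^2_{per})^*\times(H^1_{per})^*$ with $\langle v_0,1\rangle_{(H^1_{per})^*,H^1_{per}}=0$ there exist $f\in L^2(0,2\pi)$ and $g\in L^2(0,T)$ such that the solution of $u_t+u_{xxxx}+u_{xxx}+u_{xx}-v_x=f(x)g(t)$, $v_t-v_{xx}+v_x-u_x=0$ on $(0,T)\times(0,2\pi)$, with $2\pi$-periodic boundary conditions on $u,u_x,u_{xx},u_{xxx},v,v_x$ and $u(0)=u_0$, $v(0)=v_0$, satisfies $u(T,\cdot)=v(T,\cdot)=0$; (ii) for every $(u_0,v_0)\in(H^2_{per})^*\times(H^1_{per})^*$ with $\langle v_0,1\rangle_{(H^1_{per})^*,H^1_{per}}=0$ there exist $f\in L^2(0,2\pi)$ and $g\in L^2(0,T)$ such that \[ f_k\int_{-T/2}^{T/2}e^{-\overline{\lambda_k^\pm}t}g\!\left(t+\tfrac T2\right)dt=-e^{\overline{\lambda_k^\pm}\frac T2}\gamma_k^\pm\ \ (k\in\mathbb Z\setminus\{0\}),\qquad f_0\int_{-T/2}^{T/2}g\!\left(t+\tfrac T2\right)dt=-\gamma_0, \] where $f_k=\int_0^{2\pi}f(x)e^{-ikx}dx$, $f_0=\int_0^{2\pi}f(x)dx$, $\gamma_k^\pm=\langle u_0,e^{ikx}\rangle_{(H^2_{per})^*,H^2_{per}}+\overline{\theta_k^\pm}\langle v_0,e^{ikx}\rangle_{(H^1_{per})^*,H^1_{per}}$, and $\gamma_0=\langle u_0,1\rangle_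{(H^2_{per})^*,H^2_{per}}$.
   Context: $H^s_{per}(0,2\pi)$: functions $\sum_k\phi_ke^{-ikx}\in L^2(0,2\pi)$ with $\sum_k(1+|k|^2)^s|\phi_k|^2<\infty$; $(H^s_{per})^*$ its dual w.r.t. the pivot $L^2(0,2\pi)$. For $k\in\mathbb Z\setminus\{0\}$, $\lambda_k^\pm=\frac12\big[-(k^4+ik^3-ik)\pm\sqrt{(k^4+ik^3-ik)^2-4(k^6+ik^3+k^2)}\big]$, labelled so that $\lambda_k^+=-k^2+ik+O(|k|^{-1})$ and $\lambda_k^-=-k^4-ik^3+k^2+O(|k|^{-1})$ as $|k|\to\infty$; these are nonzero. $\theta_k^\pm=\eta_k^\pm/\lambda_k^\pm$ with $\eta_k^\pm=-ik^5-(1+\lambda_k^\pm)ik+k^2-\lambda_k^\pm$. The control system is well posed in $C([0,T];(H^2_{per})^*\times(H^1_{per})^* )$. *)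

theory Defs
  imports "HOL-Analysis.Analysis"
begin

text \<open>Elements of the dual spaces (H^s_per)* are represented by their
  coefficient sequences a k = <u, e^{ikx}> (duality pairing extending the L^2(0,2pi)
  inner product, conjugate-linear in the second slot). This identifies (H^s_per)*
  isometrically (up to constants) with a weighted l^2 space.\<close>

definition dual_Hper :: "real \<Rightarrow> (int \<Rightarrow> complex) \<Rightarrow> bool" where
  "dual_Hper s a \<longleftrightarrow>
     (\<lambda>k::int. (1 + (real_of_int k)^2) powr (-s) * (cmod (a k))^2) summable_on UNIV"

definition L2_on :: "real set \<Rightarrow> (real \<Rightarrow> complex) \<Rightarrow> bool" where
  "L2_on A h \<longleftrightarrow> set_borel_measurable lborel A h \<and>
                   set_integrable lborel A (\<lambda>x. (cmod (h x))^2)"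

definition fcoeff :: "(real \<Rightarrow> complex) \<Rightarrow> int \<Rightarrow> complex" where
  "fcoeff h k = (LINT x:{0..2*pi}|lborel. h x * exp (- (\<i> * of_int k * of_real x)))"

text \<open>Action of d/dx on the k-th mode in the weak formulation:
  <w_x, e^{ikx}> = - <w, (e^{ikx})_x> = (i k) <w, e^{ikx}>.\<close>
definition dsym :: "int \<Rightarrow> complex" where
  "dsym k = \<i> * of_int k"

text \<open>Weak solution on [0,T] of
  u_t + u_xxxx + u_xxx + u_xx - v_x = f(x) g(t),  v_t - v_xx + v_x - u_x = 0,
  periodic, u(0)=u0, v(0)=v0, given through the coefficients U t k = <u(t), e^{ikx}>,
  V t k = <v(t), e^{ikx}> (tested against every e^{ikx}, integrated in time);
  a, b are the coefficient sequences of u0, v0.\<close>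
definition is_solution ::
  "real \<Rightarrow> (real \<Rightarrow> complex) \<Rightarrow> (real \<Rightarrow> complex) \<Rightarrow> (int \<Rightarrow> complex) \<Rightarrow> (int \<Rightarrow> complex)
   \<Rightarrow> (real \<Rightarrow> int \<Rightarrow> complex) \<Rightarrow> (real \<Rightarrow> int \<Rightarrow> complex) \<Rightarrow> bool" where
  "is_solution T f g a b U V \<longleftrightarrow>
     (\<forall>k. continuous_on {0..T} (\<lambda>t. U t k) \<and> continuous_on {0..T} (\<lambda>t. V t k)) \<and>
     (\<forall>k. \<forall>t\<in>{0..T}.
        set_integrable lborel {0..t}
          (\<lambda>s. (- ((dsym k)^4) - (dsym k)^3 - (dsym k)^2) * U s k + dsym k * V s k
               + fcoeff f k * g s) \<and>
        set_integrable lborel {0..t}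
          (\<lambda>s. ((dsym k)^2 - dsym k) * V s k + dsym k * U s k) \<and>
        U t k = a k + (LINT s:{0..t}|lborel.
          (- ((dsym k)^4) - (dsym k)^3 - (dsym k)^2) * U s k + dsym k * V s k
               + fcoeff f k * g s) \<and>
        V t k = b k + (LINT s:{0..t}|lborel.
          ((dsym k)^2 - dsym k) * V s k + dsym k * U s k))"

text \<open>The two eigenvalues lambda_k^+ (sg = True) and lambda_k^- (sg = False).
  Only the unordered pair matters for the statement.\<close>
definition lam :: "bool \<Rightarrow> int \<Rightarrow> complex" where
  "lam sg k = (let K = (of_int k :: complex);
                   B = K^4 + \<i> * K^3 - \<i> * K;
                   C = K^6 + \<i> * K^3 + K^2
               in (- B + (if sg then 1 else -1) * csqrt (B^2 - 4 * C)) / 2)"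

definition eta :: "bool \<Rightarrow> int \<Rightarrow> complex" where
  "eta sg k = (let K = (of_int k :: complex); l = lam sg k
               in - \<i> * K^5 - (1 + l) * \<i> * K + K^2 - l)"

definition theta :: "bool \<Rightarrow> int \<Rightarrow> complex" where
  "theta sg k = eta sg k / lam sg k"

definition gam :: "(int \<Rightarrow> complex) \<Rightarrow> (int \<Rightarrow> complex) \<Rightarrow> bool \<Rightarrow> int \<Rightarrow> complex" where
  "gam a b sg k = a k + cnj (theta sg k) * b k"

end

theory Submission
  imports Defs
begin

lemma fub:
  fixes h \<phi> :: "real \<Rightarrow> complex"
  assumes h: "set_integrable lborel {0..t} h" and ph: "continuous_on {0..t} \<phi>"
  shows "(LINT s:{0..t}|lborel. \<phi> s * (LINT r:{0..s}|lborel. h r))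
       = (LINT r:{0..t}|lborel. h r * (LINT s:{r..t}|lborel. \<phi> s))"
proof -
  define h' where "h' r = indicator {0..t} r *\<^sub>R h r" for r
  define p' where "p' s = indicator {0..t} s *\<^sub>R \<phi> s" for s
  have ih: "integrable lborel h'" using h unfolding h'_def set_integrable_def .
  have ip: "integrable lborel p'" using borel_integrable_atLeastAtMost'[OF ph]
    unfolding p'_def set_integrable_def .
  have [measurable]: "h' \<in> borel_measurable lborel" "p' \<in> borel_measurable lborel"
    using ih ip by auto
  define H where "H r s = (if r \<le> s then h' r * p' s else 0)" for r s
  have mH: "case_prod H \<in> borel_measurable (lborel \<Otimes>\<^sub>M lborel)"
    unfolding H_def by measurable
  have iP: "integrable (lborel \<Otimes>\<^sub>M lborel) (\<lambda>(r,s). h' r * p' s)"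
  proof (rule lborel_pair.Fubini_integrable)
    show "(\<lambda>(r,s). h' r * p' s) \<in> borel_measurable (lborel \<Otimes>\<^sub>M lborel)" by measurable
    show "integrable lborel (\<lambda>x. LINT y|lborel. norm (case (x, y) of (r, s) \<Rightarrow> h' r * p' s))"
      by (simp add: norm_mult ip ih)
    show "AE x in lborel. integrable lborel (\<lambda>y. case (x, y) of (r, s) \<Rightarrow> h' r * p' s)"
      using ip by simp
  qed
  have iH: "integrable (lborel \<Otimes>\<^sub>M lborel) (case_prod H)"
    by (rule Bochner_Integration.integrable_bound[OF iP mH]) (auto simp: H_def norm_mult)
  have F: "(LINT s|lborel. LINT r|lborel. H r s) = (LINT r|lborel. LINT s|lborel. H r s)"
    by (rule lborel_pair.Fubini_integral[OF iH])
  have H1: "H r s = p' s * (indicator {0..s} r *\<^sub>R h r)" for r s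
    unfolding H_def h'_def p'_def by (auto split: split_indicator)
  have H2: "H r s = h' r * (indicator {r..t} s *\<^sub>R \<phi> s)" for r s
    unfolding H_def h'_def p'_def by (auto split: split_indicator)
  have L: "(LINT r|lborel. H r s) = indicator {0..t} s *\<^sub>R (\<phi> s * (LINT r:{0..s}|lborel. h r))" for s
    unfolding H1 set_lebesgue_integral_def integral_mult_right_zero
    unfolding p'_def by (simp split: split_indicator)
  have R: "(LINT s|lborel. H r s) = indicator {0..t} r *\<^sub>R (h r * (LINT s:{r..t}|lborel. \<phi> s))" for r
    unfolding H2 set_lebesgue_integral_def integral_mult_right_zero
    unfolding h'_def by (simp split: split_indicator)
  show ?thesis using F unfolding L R set_lebesgue_integral_def .
qed


lemma sint_mult_cont:
  fixes f g :: "real \<Rightarrow> complex"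
  assumes g: "set_integrable lborel {a..b} g" and f: "continuous_on {a..b} f"
  shows "set_integrable lborel {a..b} (\<lambda>s. f s * g s)"
proof -
  obtain M where M: "\<forall>s\<in>{a..b}. norm (f s) \<le> M"
    using compact_imp_bounded[OF compact_continuous_image[OF f compact_Icc]]
    unfolding bounded_iff by auto
  have m1: "(\<lambda>s. indicator {a..b} s *\<^sub>R f s) \<in> borel_measurable lborel"
    using borel_measurable_continuous_on_indicator[OF _ f] by simp
  have ig: "integrable lborel (\<lambda>s. indicator {a..b} s *\<^sub>R g s)"
    using g unfolding set_integrable_def .
  then have m2: "(\<lambda>s. indicator {a..b} s *\<^sub>R g s) \<in> borel_measurable lborel" by auto
  have eq: "(\<lambda>s. indicator {a..b} s *\<^sub>R (f s * g s)) =
      (\<lambda>s. (indicator {a..b} s *\<^sub>R f s) * (indicator {a..b} s *\<^sub>R g s))"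
    by (auto split: split_indicator)
  show ?thesis unfolding set_integrable_def
  proof (rule Bochner_Integration.integrable_bound[where f="\<lambda>s. M *\<^sub>R (indicator {a..b} s *\<^sub>R g s)"])
    show "integrable lborel (\<lambda>s. M *\<^sub>R (indicator {a..b} s *\<^sub>R g s))"
      using integrable_scaleR_right[OF ig, of M] by (simp only:)
    show "(\<lambda>s. indicator {a..b} s *\<^sub>R (f s * g s)) \<in> borel_measurable lborel"
      unfolding eq using m1 m2 by (rule borel_measurable_times)
    show "AE x in lborel. norm (indicator {a..b} x *\<^sub>R (f x * g x))
        \<le> norm (M *\<^sub>R (indicator {a..b} x *\<^sub>R g x))"
    proof (rule AE_I2)
      fix x show "norm (indicator {a..b} x *\<^sub>R (f x * g x))
        \<le> norm (M *\<^sub>R (indicator {a..b} x *\<^sub>R g x))"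
      proof (cases "x \<in> {a..b}")
        case True
        have "norm (f x) * norm (g x) \<le> M * norm (g x)"
          using M True by (simp add: mult_right_mono)
        also have "\<dots> \<le> \<bar>M\<bar> * norm (g x)" by (simp add: mult_right_mono)
        finally show ?thesis using True by (simp add: norm_mult)
      qed simp
    qed
  qed
qed

lemma lint_point: "(LINT s:{a..a}|lborel. (f s :: complex)) = 0" for a :: real
proof -
  have "AE x in lborel. indicator {a..a} x *\<^sub>R f x = 0"
    using AE_lborel_singleton[of a] by eventually_elim (auto split: split_indicator)
  then show ?thesis unfolding set_lebesgue_integral_def by (rule integral_eq_zero_AE)
qed

lemma sint_sub:
  fixes g :: "real \<Rightarrow> complex"
  assumes "set_integrable lborel {0..T} g" "t \<in> {0..T}"
  shows "set_integrable lborel {0..t} g"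
  by (rule set_integrable_subset[OF assms(1)]) (use assms(2) in auto)

lemma exp_deriv:
  "((\<lambda>s. exp (\<mu> * complex_of_real s)) has_vector_derivative (\<mu> * exp (\<mu> * complex_of_real x))) (at x within S)"
proof -
  have "((\<lambda>w. exp (\<mu> * w)) has_field_derivative (\<mu> * exp (\<mu> * complex_of_real x))) (at (complex_of_real x))"
    by (auto intro!: derivative_eq_intros)
  then show ?thesis by (rule has_vector_derivative_real_field)
qed

lemma exp_lint:
  assumes "a \<le> b"
  shows "(LINT s:{a..b}|lborel. \<mu> * exp (\<mu> * complex_of_real s))
       = exp (\<mu> * complex_of_real b) - exp (\<mu> * complex_of_real a)"
  unfolding set_lebesgue_integral_def
  by (rule integral_FTC_atLeastAtMost[OF assms exp_deriv]) (intro continuous_intros)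

definition Fm :: "(real \<Rightarrow> complex) \<Rightarrow> complex \<Rightarrow> real \<Rightarrow> complex" where
  "Fm g \<mu> t = (LINT s:{0..t}|lborel. exp (- \<mu> * complex_of_real s) * g s)"

definition Ez :: "(real \<Rightarrow> complex) \<Rightarrow> complex \<Rightarrow> complex \<Rightarrow> complex \<Rightarrow> real \<Rightarrow> complex" where
  "Ez g \<mu> z0 c t = exp (\<mu> * complex_of_real t) * (z0 + c * Fm g \<mu> t)"

lemma sint_h:
  fixes g :: "real \<Rightarrow> complex"
  assumes "set_integrable lborel {0..T} g"
  shows "set_integrable lborel {0..T} (\<lambda>s. exp (- \<mu> * complex_of_real s) * g s)"
  by (rule sint_mult_cont[OF assms]) (intro continuous_intros)

lemma Fm_cont:
  fixes g :: "real \<Rightarrow> complex"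
  assumes g: "set_integrable lborel {0..T} g"
  shows "continuous_on {0..T} (Fm g \<mu>)"
proof -
  let ?h = "\<lambda>s. exp (- \<mu> * complex_of_real s) * g s"
  have hi: "set_integrable lborel {0..T} ?h" by (rule sint_h[OF g])
  have "continuous_on {0..T} (\<lambda>t. integral {0..t} ?h)"
    by (rule indefinite_integral_continuous_1) (rule set_borel_integral_eq_integral(1)[OF hi])
  moreover have "Fm g \<mu> t = integral {0..t} ?h" if "t \<in> {0..T}" for t
    unfolding Fm_def by (rule set_borel_integral_eq_integral(2)[OF sint_sub[OF hi that]])
  ultimately show ?thesis by (metis (no_types, lifting) continuous_on_eq)
qed

lemma Ez_cont:
  fixes g :: "real \<Rightarrow> complex"
  assumes g: "set_integrable lborel {0..T} g"
  shows "continuous_on {0..T} (Ez g \<mu> z0 c)"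
  unfolding Ez_def[abs_def]
  by (intro continuous_intros Fm_cont[OF g])

lemma Ez_0: "Ez g \<mu> z0 c 0 = z0"
  unfolding Ez_def Fm_def using lint_point[of 0] by simp


lemma exp_cancel: "exp (- \<mu> * complex_of_real r) * exp (\<mu> * complex_of_real r) = 1"
  by (simp add: exp_add[symmetric])

lemma Ez_sol:
  fixes g :: "real \<Rightarrow> complex"
  assumes g: "set_integrable lborel {0..T} g" and t: "t \<in> {0..T}"
  shows "set_integrable lborel {0..t} (\<lambda>s. \<mu> * Ez g \<mu> z0 c s + c * g s)"
    and "Ez g \<mu> z0 c t = z0 + (LINT s:{0..t}|lborel. \<mu> * Ez g \<mu> z0 c s + c * g s)"
proof -
  let ?E = "\<lambda>s. exp (\<mu> * complex_of_real s)"
  let ?h = "\<lambda>s. exp (- \<mu> * complex_of_real s) * g s"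
  have t0: "0 \<le> t" using t by simp
  have sub: "{0..t} \<subseteq> {0..T}" using t by auto
  have gi: "set_integrable lborel {0..t} g" by (rule sint_sub[OF g t])
  have hi: "set_integrable lborel {0..t} ?h" by (rule sint_sub[OF sint_h[OF g] t])
  have Fc: "continuous_on {0..t} (Fm g \<mu>)" by (rule continuous_on_subset[OF Fm_cont[OF g] sub])
  have Ezc: "continuous_on {0..t} (Ez g \<mu> z0 c)" by (rule continuous_on_subset[OF Ez_cont[OF g] sub])
  have ezi: "set_integrable lborel {0..t} (Ez g \<mu> z0 c)" by (rule borel_integrable_atLeastAtMost'[OF Ezc])
  show "set_integrable lborel {0..t} (\<lambda>s. \<mu> * Ez g \<mu> z0 c s + c * g s)"
    using ezi gi by (intro set_integral_add(1) set_integrable_mult_right) auto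
  have i2: "set_integrable lborel {0..t} (\<lambda>s. \<mu> * ?E s)"
    by (intro borel_integrable_atLeastAtMost' continuous_intros)
  have i3: "set_integrable lborel {0..t} (\<lambda>s. (\<mu> * ?E s) * Fm g \<mu> s)"
    by (intro borel_integrable_atLeastAtMost' continuous_intros Fc)
  have fub': "(LINT s:{0..t}|lborel. (\<mu> * ?E s) * Fm g \<mu> s) = ?E t * Fm g \<mu> t - (LINT s:{0..t}|lborel. g s)"
  proof -
    have "(LINT s:{0..t}|lborel. (\<mu> * ?E s) * Fm g \<mu> s)
        = (LINT r:{0..t}|lborel. ?h r * (LINT s:{r..t}|lborel. \<mu> * ?E s))"
      unfolding Fm_def by (rule fub[OF hi]) (intro continuous_intros)
    also have "\<dots> = (LINT r:{0..t}|lborel. ?E t * ?h r - g r)"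
    proof (rule set_lebesgue_integral_cong)
      show "\<forall>x. x \<in> {0..t} \<longrightarrow> ?h x * (LINT s:{x..t}|lborel. \<mu> * ?E s) = ?E t * ?h x - g x"
      proof (intro allI impI)
        fix x assume "x \<in> {0..t}"
        then have "x \<le> t" by simp
        then have "?h x * (LINT s:{x..t}|lborel. \<mu> * ?E s) = ?h x * (?E t - ?E x)"
          by (simp only: exp_lint)
        also have "\<dots> = ?E t * ?h x - (exp (- \<mu> * complex_of_real x) * ?E x) * g x"
          by (simp add: algebra_simps)
        also have "\<dots> = ?E t * ?h x - g x" by (simp only: exp_cancel) simp
        finally show "?h x * (LINT s:{x..t}|lborel. \<mu> * ?E s) = ?E t * ?h x - g x" .
      qed
    qed simp
    also have "\<dots> = ?E t * Fm g \<mu> t - (LINT s:{0..t}|lborel. g s)"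
      using set_integral_diff(2)[OF set_integrable_mult_right[OF hi, of "?E t"] gi] unfolding Fm_def by simp
    finally show ?thesis .
  qed
  have "(LINT s:{0..t}|lborel. \<mu> * Ez g \<mu> z0 c s + c * g s)
      = (LINT s:{0..t}|lborel. (z0 * (\<mu> * ?E s) + c * ((\<mu> * ?E s) * Fm g \<mu> s)) + c * g s)"
    by (rule set_lebesgue_integral_cong) (auto simp: Ez_def algebra_simps)
  also have "\<dots> = (LINT s:{0..t}|lborel. z0 * (\<mu> * ?E s) + c * ((\<mu> * ?E s) * Fm g \<mu> s)) + (LINT s:{0..t}|lborel. c * g s)"
    by (rule set_integral_add(2)) (use i2 i3 gi in auto)
  also have "(LINT s:{0..t}|lborel. z0 * (\<mu> * ?E s) + c * ((\<mu> * ?E s) * Fm g \<mu> s))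
     = (LINT s:{0..t}|lborel. z0 * (\<mu> * ?E s)) + (LINT s:{0..t}|lborel. c * ((\<mu> * ?E s) * Fm g \<mu> s))"
    by (rule set_integral_add(2)) (use i2 i3 in auto)
  also have "(LINT s:{0..t}|lborel. z0 * (\<mu> * ?E s)) + (LINT s:{0..t}|lborel. c * ((\<mu> * ?E s) * Fm g \<mu> s))
      + (LINT s:{0..t}|lborel. c * g s)
     = z0 * (LINT s:{0..t}|lborel. \<mu> * ?E s) + c * (LINT s:{0..t}|lborel. (\<mu> * ?E s) * Fm g \<mu> s)
      + c * (LINT s:{0..t}|lborel. g s)"
    by (simp only: set_integral_mult_right)
  also have "\<dots> = Ez g \<mu> z0 c t - z0"
  proof -
    have e1: "(LINT s:{0..t}|lborel. \<mu> * ?E s) = ?E t - 1"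
      using exp_lint[OF t0, of \<mu>] by simp
    show ?thesis by (simp only: e1 fub') (simp add: Ez_def algebra_simps)
  qed
  finally show "Ez g \<mu> z0 c t = z0 + (LINT s:{0..t}|lborel. \<mu> * Ez g \<mu> z0 c s + c * g s)"
    by simp
qed

lemma Ez_unique:
  fixes g z :: "real \<Rightarrow> complex"
  assumes g: "set_integrable lborel {0..T} g" and zc: "continuous_on {0..T} z"
    and eq: "\<And>t. t \<in> {0..T} \<Longrightarrow> z t = z0 + (LINT s:{0..t}|lborel. \<mu> * z s + c * g s)"
    and t: "t \<in> {0..T}"
  shows "z t = Ez g \<mu> z0 c t"
proof -
  define w where "w s = z s - Ez g \<mu> z0 c s" for s
  have wc: "continuous_on {0..T} w" unfolding w_def[abs_def]
    by (intro continuous_intros zc Ez_cont[OF g])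
  have weq: "w s = \<mu> * integral {0..s} w" if s: "s \<in> {0..T}" for s
  proof -
    have sub: "{0..s} \<subseteq> {0..T}" using s by auto
    have gi: "set_integrable lborel {0..s} g" by (rule sint_sub[OF g s])
    have zi: "set_integrable lborel {0..s} z"
      by (rule borel_integrable_atLeastAtMost'[OF continuous_on_subset[OF zc sub]])
    have ei: "set_integrable lborel {0..s} (Ez g \<mu> z0 c)"
      by (rule borel_integrable_atLeastAtMost'[OF continuous_on_subset[OF Ez_cont[OF g] sub]])
    have wi: "set_integrable lborel {0..s} w"
      by (rule borel_integrable_atLeastAtMost'[OF continuous_on_subset[OF wc sub]])
    have "w s = (LINT r:{0..s}|lborel. \<mu> * z r + c * g r)
        - (LINT r:{0..s}|lborel. \<mu> * Ez g \<mu> z0 c r + c * g r)"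
      unfolding w_def using eq[OF s] Ez_sol(2)[OF g s, of \<mu> z0 c] by simp
    also have "\<dots> = (LINT r:{0..s}|lborel. (\<mu> * z r + c * g r) - (\<mu> * Ez g \<mu> z0 c r + c * g r))"
      by (rule set_integral_diff(2)[symmetric]) (use zi gi ei in auto)
    also have "\<dots> = (LINT r:{0..s}|lborel. \<mu> * w r)"
      by (rule set_lebesgue_integral_cong) (auto simp: w_def algebra_simps)
    also have "\<dots> = \<mu> * integral {0..s} w"
      using set_borel_integral_eq_integral(2)[OF wi] by simp
    finally show ?thesis .
  qed
  define y where "y s = exp (- \<mu> * complex_of_real s) * w s" for s
  have yd: "(y has_vector_derivative 0) (at s within {0..T})" if s: "s \<in> {0..T}" for s
  proof -
    have d1: "(w has_vector_derivative \<mu> * w s) (at s within {0..T})"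
    proof (rule has_vector_derivative_transform[OF s])
      show "\<And>x. x \<in> {0..T} \<Longrightarrow> w x = \<mu> * integral {0..x} w" by (rule weq)
      show "((\<lambda>x. \<mu> * integral {0..x} w) has_vector_derivative \<mu> * w s) (at s within {0..T})"
        by (rule has_vector_derivative_mult_right[OF integral_has_vector_derivative[OF wc s]])
    qed
    have "(y has_vector_derivative (exp (- \<mu> * complex_of_real s) * (\<mu> * w s)
          + (- \<mu> * exp (- \<mu> * complex_of_real s)) * w s)) (at s within {0..T})"
      unfolding y_def[abs_def] by (rule has_vector_derivative_mult[OF exp_deriv d1])
    then show ?thesis by (simp add: algebra_simps)
  qed
  obtain C where C: "\<And>x. x \<in> {0..T} \<Longrightarrow> y x = C"
    using has_vector_derivative_zero_constant[of "{0..T}" y] yd by auto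
  have T0: "0 \<in> {0..T}" using t by auto
  have "y 0 = 0" using weq[OF T0] by (simp add: y_def)
  hence "y t = 0" using C[OF T0] C[OF t] by simp
  hence "w t = 0" by (simp add: y_def)
  thus ?thesis by (simp add: w_def)
qed


abbreviation "BB k \<equiv> (of_int k :: complex)^4 + \<i> * (of_int k)^3 - \<i> * of_int k"
abbreviation "CC k \<equiv> (of_int k :: complex)^6 + \<i> * (of_int k)^3 + (of_int k)^2"

lemma lam_quad: "(lam sg k)^2 + BB k * lam sg k + CC k = 0"
proof -
  define S where "S = csqrt (BB k ^ 2 - 4 * CC k)"
  have S2: "S^2 = BB k ^ 2 - 4 * CC k" unfolding S_def by simp
  have L: "lam sg k = (- BB k + (if sg then 1 else -1) * S) / 2"
    unfolding lam_def Let_def S_def by simp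
  show ?thesis unfolding L using S2 by (cases sg) (simp_all add: field_simps power2_eq_square, algebra+)
qed

lemma lam_ne0: "k \<noteq> 0 \<Longrightarrow> lam sg k \<noteq> 0"
proof
  assume k: "k \<noteq> 0" and l: "lam sg k = 0"
  then have c0: "CC k = 0" using lam_quad[of sg k] by simp
  have "CC k + cnj (CC k) = of_int (2 * (k^6 + k^2))" by simp
  then have "k^6 + k^2 = 0" using c0 by (simp del: of_int_add of_int_mult)
  moreover have "k^2 > 0" using k by simp
  moreover have "k^6 \<ge> 0"
  proof -
    have "k^6 = (k^3)^2" by (simp flip: power_mult)
    then show ?thesis by simp
  qed
  ultimately show False by simp
qed


lemma int_sq_ne2: "(k::int)^2 \<noteq> 2"
proof
  assume h: "k^2 = 2"
  show False
  proof (cases "\<bar>k\<bar> \<le> 1")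
    case True
    then have "k^2 \<le> 1" by (simp add: abs_square_le_1)
    then show False using h by simp
  next
    case False
    then have "2 \<le> \<bar>k\<bar>" by simp
    then have "2^2 \<le> \<bar>k\<bar>^2" by (rule power_mono) simp
    then show False using h by simp
  qed
qed

lemma disc_ne0:
  assumes k: "k \<noteq> 0" shows "BB k ^ 2 - 4 * CC k \<noteq> 0"
proof
  assume D: "BB k ^ 2 - 4 * CC k = 0"
  have "(BB k ^ 2 - 4 * CC k) - cnj (BB k ^ 2 - 4 * CC k) = 2 * \<i> * of_int (2*k^7 - 2*k^5 - 4*k^3)"
    (is "?l = ?r")
    by (simp add: algebra_simps power2_eq_square power_mult_distrib) (simp add: power_def algebra_simps)?
  then have "0 - cnj 0 = ?r" by (simp only: D)
  then have "of_int (2*k^7 - 2*k^5 - 4*k^3) = (0::complex)" by (simp del: of_int_diff of_int_mult of_int_power)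
  then have "2*k^7 - 2*k^5 - 4*k^3 = 0" by (simp only: of_int_eq_0_iff)
  then have "(2 * k^3) * ((k^2 - 2) * (k^2 + 1)) = 0" by (simp add: algebra_simps flip: power_add)
  moreover have "k^2 + 1 \<noteq> 0" by (smt (verit) zero_le_power2)
  ultimately show False using k int_sq_ne2[of k] by simp
qed


lemma alg1:
  fixes L K j :: complex
  assumes "j * j = -1" "L^2 + (K^4 + j * K^3 - j * K) * L + (K^6 + j * K^3 + K^2) = 0"
  shows "L * ((j * K) ^ 3 - (j * K) ^ 4 - (j * K)^2) - (- (j * K ^ 5) - (1 + L) * j * K + K^2 - L) * (j * K) = L^2"
  using assms by algebra

lemma alg2:
  fixes L K j :: complex
  assumes "j * j = -1" "L^2 + (K^4 + j * K^3 - j * K) * L + (K^6 + j * K^3 + K^2) = 0"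
  shows "(- (j * K ^ 5) - (1 + L) * j * K + K^2 - L) * ((j * K)^2 + j * K) - L * (j * K)
     = L * (- (j * K ^ 5) - (1 + L) * j * K + K^2 - L)"
  using assms by algebra

lemma eig1c:
  assumes k: "k \<noteq> 0"
  shows "cnj (- ((dsym k)^4) - (dsym k)^3 - (dsym k)^2) + theta sg k * cnj (dsym k) = lam sg k"
proof -
  have l0: "lam sg k \<noteq> 0" by (rule lam_ne0[OF k])
  have q: "(lam sg k)^2 + BB k * lam sg k + CC k = 0" by (rule lam_quad)
  have "lam sg k * cnj (- ((dsym k)^4) - (dsym k)^3 - (dsym k)^2) + eta sg k * cnj (dsym k) = (lam sg k)^2"
    using q alg1[of "\<i>", OF _ q] alg2[of "\<i>", OF _ q] unfolding eta_def dsym_def Let_def by simp_all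
  then show ?thesis using l0 unfolding theta_def by (simp add: field_simps power2_eq_square)
qed

lemma eig2c:
  assumes k: "k \<noteq> 0"
  shows "cnj (dsym k) + theta sg k * cnj ((dsym k)^2 - dsym k) = lam sg k * theta sg k"
proof -
  have l0: "lam sg k \<noteq> 0" by (rule lam_ne0[OF k])
  have q: "(lam sg k)^2 + BB k * lam sg k + CC k = 0" by (rule lam_quad)
  have "lam sg k * cnj (dsym k) + eta sg k * cnj ((dsym k)^2 - dsym k) = lam sg k * eta sg k"
    using q alg1[of "\<i>", OF _ q] alg2[of "\<i>", OF _ q] unfolding eta_def dsym_def Let_def by simp_all
  then show ?thesis using l0 unfolding theta_def by (simp add: field_simps power2_eq_square)
qed


lemma eig1:
  assumes k: "k \<noteq> 0"
  shows "(- ((dsym k)^4) - (dsym k)^3 - (dsym k)^2) + cnj (theta sg k) * dsym k = cnj (lam sg k)"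
  using arg_cong[OF eig1c[OF k, of sg], of cnj] by simp

lemma eig2:
  assumes k: "k \<noteq> 0"
  shows "dsym k + cnj (theta sg k) * ((dsym k)^2 - dsym k) = cnj (lam sg k) * cnj (theta sg k)"
  using arg_cong[OF eig2c[OF k, of sg], of cnj] by simp

lemma eig_tr:
  "cnj (lam True k) + cnj (lam False k) = (- ((dsym k)^4) - (dsym k)^3 - (dsym k)^2) + ((dsym k)^2 - dsym k)"
proof -
  have "lam True k + lam False k = - BB k" unfolding lam_def Let_def by (simp add: field_simps)
  then have "cnj (lam True k + lam False k) = cnj (- BB k)" by simp
  moreover have i3: "\<i> ^ 3 = - \<i>" by (simp add: power3_eq_cube)
  ultimately show ?thesis by (simp add: dsym_def algebra_simps)
qed

lemma lam_ne:
  assumes k: "k \<noteq> 0" shows "lam True k \<noteq> lam False k"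
proof
  assume "lam True k = lam False k"
  then have "csqrt (BB k ^ 2 - 4 * CC k) = 0" unfolding lam_def Let_def by (simp add: field_simps)
  then show False using disc_ne0[OF k] by simp
qed

lemma theta_ne:
  assumes k: "k \<noteq> 0" shows "cnj (theta True k) \<noteq> cnj (theta False k)"
proof
  assume "cnj (theta True k) = cnj (theta False k)"
  then have "theta True k = theta False k" by simp
  then have "lam True k = lam False k" using eig1c[OF k, of True] eig1c[OF k, of False] by simp
  then show False using lam_ne[OF k] by simp
qed


lemma shift_lint:
  fixes g :: "real \<Rightarrow> complex"
  shows "(LINT t:{-T/2..T/2}|lborel. exp (- \<mu> * complex_of_real t) * g (t + T/2))
     = exp (\<mu> * complex_of_real (T/2)) * Fm g \<mu> T"
proof -
  have e: "exp (\<mu> * complex_of_real (T/2)) * exp (- \<mu> * complex_of_real s)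
      = exp (- \<mu> * complex_of_real (s - T/2))" for s
  proof -
    have "- \<mu> * complex_of_real (s - T/2) = \<mu> * complex_of_real (T/2) + - \<mu> * complex_of_real s"
      by (simp add: algebra_simps)
    then show ?thesis by (simp only: exp_add)
  qed
  have "exp (\<mu> * complex_of_real (T/2)) * Fm g \<mu> T
      = (\<integral>s. indicator {0..T} s *\<^sub>R (exp (- \<mu> * complex_of_real (s - T/2)) * g s) \<partial>lborel)"
    unfolding Fm_def set_lebesgue_integral_def integral_mult_right_zero[symmetric]
  proof (rule Bochner_Integration.integral_cong)
    fix s
    have "exp (\<mu> * complex_of_real (T/2)) * (exp (- \<mu> * complex_of_real s) * g s)
        = exp (- \<mu> * complex_of_real (s - T/2)) * g s"
      by (simp only: mult.assoc[symmetric] e)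
    then show "exp (\<mu> * complex_of_real (T/2)) * (indicator {0..T} s *\<^sub>R (exp (- \<mu> * complex_of_real s) * g s))
      = indicator {0..T} s *\<^sub>R (exp (- \<mu> * complex_of_real (s - T/2)) * g s)"
      by (cases "s \<in> {0..T}") simp_all
  qed simp
  also have "\<dots> = (\<integral>x. indicator {0..T} (T/2 + 1 * x) *\<^sub>R
        (exp (- \<mu> * complex_of_real (T/2 + 1 * x - T/2)) * g (T/2 + 1 * x)) \<partial>lborel)"
    using lborel_integral_real_affine[of 1 "\<lambda>s. indicator {0..T} s *\<^sub>R (exp (- \<mu> * complex_of_real (s - T/2)) * g s)" "T/2"]
    by simp
  also have "\<dots> = (LINT t:{-T/2..T/2}|lborel. exp (- \<mu> * complex_of_real t) * g (t + T/2))"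
    unfolding set_lebesgue_integral_def
    by (rule Bochner_Integration.integral_cong) (auto split: split_indicator simp: add.commute)
  finally show ?thesis by simp
qed

lemma mom_iff:
  fixes g :: "real \<Rightarrow> complex"
  shows "(c * (LINT t:{-T/2..T/2}|lborel. exp (- \<mu> * complex_of_real t) * g (t + T/2))
          = - exp (\<mu> * complex_of_real (T/2)) * z0) \<longleftrightarrow> Ez g \<mu> z0 c T = 0"
proof -
  have "(c * (LINT t:{-T/2..T/2}|lborel. exp (- \<mu> * complex_of_real t) * g (t + T/2))
          = - exp (\<mu> * complex_of_real (T/2)) * z0)
     \<longleftrightarrow> exp (\<mu> * complex_of_real (T/2)) * (z0 + c * Fm g \<mu> T) = 0"
    unfolding shift_lint by (auto simp: algebra_simps add_eq_0_iff)
  also have "\<dots> \<longleftrightarrow> Ez g \<mu> z0 c T = 0" unfolding Ez_def by simp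
  finally show ?thesis .
qed

lemma mom0_iff:
  fixes g :: "real \<Rightarrow> complex"
  shows "(c * (LINT t:{-T/2..T/2}|lborel. g (t + T/2)) = - z0) \<longleftrightarrow> Ez g 0 z0 c T = 0"
  using mom_iff[of c T 0 g z0] by simp

lemma combo:
  fixes g u v :: "real \<Rightarrow> complex"
  assumes g: "set_integrable lborel {0..T} g"
    and uc: "continuous_on {0..T} u" and vc: "continuous_on {0..T} v"
    and hu: "\<And>t. t \<in> {0..T} \<Longrightarrow> set_integrable lborel {0..t} (\<lambda>s. p * u s + q * v s + fc * g s) \<and>
              u t = ain + (LINT s:{0..t}|lborel. p * u s + q * v s + fc * g s)"
    and hv: "\<And>t. t \<in> {0..T} \<Longrightarrow> set_integrable lborel {0..t} (\<lambda>s. sd * v s + r * u s) \<and>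
              v t = bin + (LINT s:{0..t}|lborel. sd * v s + r * u s)"
    and E1: "p + cc * r = \<mu>" and E2: "q + cc * sd = \<mu> * cc"
    and t: "t \<in> {0..T}"
  shows "u t + cc * v t = Ez g \<mu> (ain + cc * bin) fc t"
proof (rule Ez_unique[OF g _ _ t, where z = "\<lambda>t. u t + cc * v t"])
  show "continuous_on {0..T} (\<lambda>t. u t + cc * v t)" by (intro continuous_intros uc vc)
  fix t assume t: "t \<in> {0..T}"
  have i1: "set_integrable lborel {0..t} (\<lambda>s. p * u s + q * v s + fc * g s)" using hu[OF t] by simp
  have i2: "set_integrable lborel {0..t} (\<lambda>s. cc * (sd * v s + r * u s))"
    using hv[OF t] by (intro set_integrable_mult_right) simp
  have "u t + cc * v t = ain + cc * bin + ((LINT s:{0..t}|lborel. p * u s + q * v s + fc * g s)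
        + (LINT s:{0..t}|lborel. cc * (sd * v s + r * u s)))"
  proof -
    have ut: "u t = ain + (LINT s:{0..t}|lborel. p * u s + q * v s + fc * g s)" using hu[OF t] by blast
    have vt: "v t = bin + (LINT s:{0..t}|lborel. sd * v s + r * u s)" using hv[OF t] by blast
    show ?thesis unfolding ut vt by (simp only: set_integral_mult_right) (simp add: algebra_simps)
  qed
  also have "(LINT s:{0..t}|lborel. p * u s + q * v s + fc * g s)
        + (LINT s:{0..t}|lborel. cc * (sd * v s + r * u s))
      = (LINT s:{0..t}|lborel. (p * u s + q * v s + fc * g s) + cc * (sd * v s + r * u s))"
    by (rule set_integral_add(2)[OF i1 i2, symmetric])
  also have "\<dots> = (LINT s:{0..t}|lborel. \<mu> * (u s + cc * v s) + fc * g s)"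
  proof (rule set_lebesgue_integral_cong)
    show "\<forall>x. x \<in> {0..t} \<longrightarrow> p * u x + q * v x + fc * g x + cc * (sd * v x + r * u x) =
         \<mu> * (u x + cc * v x) + fc * g x"
    proof (intro allI impI)
      fix x
      have "p * u x + q * v x + fc * g x + cc * (sd * v x + r * u x)
          = (p + cc * r) * u x + (q + cc * sd) * v x + fc * g x" by (simp add: algebra_simps)
      also have "\<dots> = \<mu> * (u x + cc * v x) + fc * g x" by (simp only: E1 E2) (simp add: algebra_simps)
      finally show "p * u x + q * v x + fc * g x + cc * (sd * v x + r * u x) =
         \<mu> * (u x + cc * v x) + fc * g x" .
    qed
  qed simp
  finally show "u t + cc * v t = ain + cc * bin + (LINT s:{0..t}|lborel. \<mu> * (u s + cc * v s) + fc * g s)" .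
qed


lemma algA:
  fixes c1 c2 r m1 m2 sd z1 z2 G :: complex
  assumes "c1 \<noteq> c2" "r = (m1 - m2) / (c1 - c2)" "sd = m2 + c1 * r"
  shows "sd * ((z1 - z2) / (c1 - c2)) + r * (z1 - c1 * ((z1 - z2) / (c1 - c2)))
       = ((m1 * z1 + G) - (m2 * z2 + G)) / (c1 - c2)"
proof -
  have d: "c1 - c2 \<noteq> 0" using assms(1) by simp
  define V where "V = (z1 - z2) / (c1 - c2)"
  have hV: "V * (c1 - c2) = z1 - z2" unfolding V_def using d by simp
  have hr: "r * (c1 - c2) = m1 - m2" unfolding assms(2) using d by simp
  have "(sd * V + r * (z1 - c1 * V)) * (c1 - c2) = (m1 * z1 + G) - (m2 * z2 + G)"
    using hV hr assms(3) by algebra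
  then show ?thesis unfolding V_def[symmetric] using d by (simp add: eq_divide_eq)
qed

lemma algB:
  fixes c1 c2 r m1 m2 sd z1 z2 G p q :: complex
  assumes "c1 \<noteq> c2" "r = (m1 - m2) / (c1 - c2)" "sd = m2 + c1 * r" "p = m1 - c1 * r" "q = c1 * (m1 - sd)"
  shows "p * (z1 - c1 * ((z1 - z2) / (c1 - c2))) + q * ((z1 - z2) / (c1 - c2)) + G
       = (c1 * (m2 * z2 + G) - c2 * (m1 * z1 + G)) / (c1 - c2)"
proof -
  have d: "c1 - c2 \<noteq> 0" using assms(1) by simp
  define V where "V = (z1 - z2) / (c1 - c2)"
  have hV: "V * (c1 - c2) = z1 - z2" unfolding V_def using d by simp
  have hr: "r * (c1 - c2) = m1 - m2" unfolding assms(2) using d by simp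
  have "(p * (z1 - c1 * V) + q * V + G) * (c1 - c2) = c1 * (m2 * z2 + G) - c2 * (m1 * z1 + G)"
    using hV hr assms(3,4,5) by algebra
  then show ?thesis unfolding V_def[symmetric] using d by (simp add: eq_divide_eq)
qed

lemma combo_exist:
  fixes g :: "real \<Rightarrow> complex" and ain bin fc :: complex
  assumes g: "set_integrable lborel {0..T} g"
    and E1T: "p + c1 * r = m1" and E2T: "q + c1 * sd = m1 * c1"
    and E1F: "p + c2 * r = m2" and E2F: "q + c2 * sd = m2 * c2"
    and Tr: "m1 + m2 = p + sd" and ne: "c1 \<noteq> c2"
  defines "z1 \<equiv> Ez g m1 (ain + c1 * bin) fc" and "z2 \<equiv> Ez g m2 (ain + c2 * bin) fc"
  defines "v \<equiv> \<lambda>t. (z1 t - z2 t) / (c1 - c2)"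
  defines "u \<equiv> \<lambda>t. z1 t - c1 * v t"
  shows "continuous_on {0..T} u" "continuous_on {0..T} v"
    "t \<in> {0..T} \<Longrightarrow> set_integrable lborel {0..t} (\<lambda>s. p * u s + q * v s + fc * g s) \<and>
              u t = ain + (LINT s:{0..t}|lborel. p * u s + q * v s + fc * g s)"
    "t \<in> {0..T} \<Longrightarrow> set_integrable lborel {0..t} (\<lambda>s. sd * v s + r * u s) \<and>
              v t = bin + (LINT s:{0..t}|lborel. sd * v s + r * u s)"
proof -
  have d: "c1 - c2 \<noteq> 0" using ne by simp
  have z1c: "continuous_on {0..T} z1" unfolding z1_def by (rule Ez_cont[OF g])
  have z2c: "continuous_on {0..T} z2" unfolding z2_def by (rule Ez_cont[OF g])
  show vc: "continuous_on {0..T} v" unfolding v_def using d by (auto intro!: continuous_intros z1c z2c)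
  show uc: "continuous_on {0..T} u" unfolding u_def by (intro continuous_intros z1c vc)
  have r_eq: "r = (m1 - m2) / (c1 - c2)"
  proof -
    have "(c1 - c2) * r = (p + c1 * r) - (p + c2 * r)" by (simp add: algebra_simps)
    then have "(c1 - c2) * r = m1 - m2" by (simp only: E1T E1F)
    then show ?thesis using d by (simp add: field_simps)
  qed
  have q1: "q = c1 * (m1 - sd)"
  proof -
    have "q = (q + c1 * sd) - c1 * sd" by simp
    then have "q = m1 * c1 - c1 * sd" by (simp only: E2T)
    then show ?thesis by (simp add: algebra_simps)
  qed
  have q2: "q = c2 * (m2 - sd)"
  proof -
    have "q = (q + c2 * sd) - c2 * sd" by simp
    then have "q = m2 * c2 - c2 * sd" by (simp only: E2F)
    then show ?thesis by (simp add: algebra_simps)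
  qed
  have p1: "p = m1 - c1 * r" using E1T by (simp add: eq_diff_eq)
  fix t assume t: "t \<in> {0..T}"
  have sub: "{0..t} \<subseteq> {0..T}" using t by auto
  have gi: "set_integrable lborel {0..t} g" by (rule sint_sub[OF g t])
  have I1: "set_integrable lborel {0..t} (\<lambda>s. m1 * z1 s + fc * g s)" and z1t: "z1 t = (ain + c1 * bin) + (LINT s:{0..t}|lborel. m1 * z1 s + fc * g s)"
    unfolding z1_def by (rule Ez_sol[OF g t])+
  have I2: "set_integrable lborel {0..t} (\<lambda>s. m2 * z2 s + fc * g s)" and z2t: "z2 t = (ain + c2 * bin) + (LINT s:{0..t}|lborel. m2 * z2 s + fc * g s)"
    unfolding z2_def by (rule Ez_sol[OF g t])+
  define J1 where "J1 = (LINT s:{0..t}|lborel. m1 * z1 s + fc * g s)"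
  define J2 where "J2 = (LINT s:{0..t}|lborel. m2 * z2 s + fc * g s)"
  have sd_eq: "sd = m2 + c1 * r"
  proof -
    have "sd = (p + sd) - p" by simp
    then have "sd = (m1 + m2) - p" by (simp only: Tr)
    then show ?thesis unfolding p1 by simp
  qed
  have ptA: "sd * v s + r * u s = ((m1 * z1 s + fc * g s) - (m2 * z2 s + fc * g s)) / (c1 - c2)" for s
    unfolding u_def v_def by (rule algA[OF ne r_eq sd_eq])
  have ptB: "p * u s + q * v s + fc * g s = (c1 * (m2 * z2 s + fc * g s) - c2 * (m1 * z1 s + fc * g s)) / (c1 - c2)" for s
    unfolding u_def v_def by (rule algB[OF ne r_eq sd_eq p1 q1])
  have iA: "set_integrable lborel {0..t} (\<lambda>s. ((m1 * z1 s + fc * g s) - (m2 * z2 s + fc * g s)) / (c1 - c2))"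
    using I1 I2 by (intro set_integrable_divide set_integral_diff(1)) auto
  have iB: "set_integrable lborel {0..t} (\<lambda>s. (c1 * (m2 * z2 s + fc * g s) - c2 * (m1 * z1 s + fc * g s)) / (c1 - c2))"
    using I1 I2 by (intro set_integrable_divide set_integral_diff(1) set_integrable_mult_right) auto
  have LA: "(LINT s:{0..t}|lborel. ((m1 * z1 s + fc * g s) - (m2 * z2 s + fc * g s)) / (c1 - c2)) = (J1 - J2) / (c1 - c2)"
    unfolding J1_def J2_def set_integral_divide_zero using set_integral_diff(2)[OF I1 I2] by simp
  have LB: "(LINT s:{0..t}|lborel. (c1 * (m2 * z2 s + fc * g s) - c2 * (m1 * z1 s + fc * g s)) / (c1 - c2))
       = (c1 * J2 - c2 * J1) / (c1 - c2)"
    unfolding J1_def J2_def set_integral_divide_zero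
    using set_integral_diff(2)[OF set_integrable_mult_right[OF I2, of c1] set_integrable_mult_right[OF I1, of c2]]
    by (simp only: set_integral_mult_right)
  show "set_integrable lborel {0..t} (\<lambda>s. sd * v s + r * u s) \<and> v t = bin + (LINT s:{0..t}|lborel. sd * v s + r * u s)"
  proof
    show "set_integrable lborel {0..t} (\<lambda>s. sd * v s + r * u s)" unfolding ptA by (rule iA)
    have "v t = bin + (J1 - J2) / (c1 - c2)"
      unfolding v_def using z1t z2t d unfolding J1_def[symmetric] J2_def[symmetric] by (simp add: field_simps)
    then show "v t = bin + (LINT s:{0..t}|lborel. sd * v s + r * u s)" unfolding ptA LA .
  qed
  show "set_integrable lborel {0..t} (\<lambda>s. p * u s + q * v s + fc * g s) \<and> u t = ain + (LINT s:{0..t}|lborel. p * u s + q * v s + fc * g s)"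
  proof
    show "set_integrable lborel {0..t} (\<lambda>s. p * u s + q * v s + fc * g s)" unfolding ptB by (rule iB)
    have "u t = ain + (c1 * J2 - c2 * J1) / (c1 - c2)"
      unfolding u_def v_def using z1t z2t d unfolding J1_def[symmetric] J2_def[symmetric] by (simp add: field_simps)
    then show "u t = ain + (LINT s:{0..t}|lborel. p * u s + q * v s + fc * g s)" unfolding ptB LB .
  qed
qed


lemma le_1_sq: "(x::real) \<le> 1 + x^2"
proof (cases "x \<le> 1")
  case True then show ?thesis by (smt (verit) zero_le_power2)
next
  case False
  then have "x * 1 \<le> x * x" by (intro mult_left_mono) auto
  then show ?thesis by (simp add: power2_eq_square)
qed

lemma L2_int:
  fixes g :: "real \<Rightarrow> complex"
  assumes "L2_on {0<..<T} g"
  shows "set_integrable lborel {0..T} g"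
proof -
  have m: "(\<lambda>x. indicator {0<..<T} x *\<^sub>R g x) \<in> borel_measurable lborel"
    and i2: "set_integrable lborel {0<..<T} (\<lambda>x. (cmod (g x))^2)"
    using assms unfolding L2_on_def set_borel_measurable_def by auto
  have one: "set_integrable lborel {0<..<T} (\<lambda>x. 1::real)"
    by (rule set_integrable_subset[OF borel_integrable_atLeastAtMost'[of 0 T "\<lambda>_. 1::real"]]) auto
  have i3: "set_integrable lborel {0<..<T} (\<lambda>x. 1 + (cmod (g x))^2)"
    by (rule set_integral_add(1)[OF one i2])
  have io: "set_integrable lborel {0<..<T} g"
    unfolding set_integrable_def
  proof (rule Bochner_Integration.integrable_bound[where f="\<lambda>x. indicator {0<..<T} x *\<^sub>R (1 + (cmod (g x))^2)"])
    show "integrable lborel (\<lambda>x. indicator {0<..<T} x *\<^sub>R (1 + (cmod (g x))^2))"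
      using i3 unfolding set_integrable_def .
    show "(\<lambda>x. indicator {0<..<T} x *\<^sub>R g x) \<in> borel_measurable lborel" by (rule m)
    show "AE x in lborel. norm (indicator {0<..<T} x *\<^sub>R g x) \<le> norm (indicator {0<..<T} x *\<^sub>R (1 + (cmod (g x))^2))"
    proof (rule AE_I2)
      fix x
      have "cmod (g x) \<le> 1 + (cmod (g x))^2" by (rule le_1_sq)
      then show "norm (indicator {0<..<T} x *\<^sub>R g x) \<le> norm (indicator {0<..<T} x *\<^sub>R (1 + (cmod (g x))^2))"
        by (auto split: split_indicator)
    qed
  qed
  have s1: "({0..T} - {0<..<T}) \<union> ({0<..<T} - {0..T}) \<subseteq> {0,T}" by auto
  show ?thesis
    using io set_integrable_discrete_difference[of "{0,T}" "{0..T}" "{0<..<T}" lborel g, OF _ s1] by simp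
qed

definition pk :: "int \<Rightarrow> complex" where "pk k = - ((dsym k)^4) - (dsym k)^3 - (dsym k)^2"
definition sk :: "int \<Rightarrow> complex" where "sk k = (dsym k)^2 - dsym k"

lemma sol_unfold:
  assumes "is_solution T f g a b U V" "t \<in> {0..T}"
  shows "continuous_on {0..T} (\<lambda>t. U t k)" "continuous_on {0..T} (\<lambda>t. V t k)"
    "set_integrable lborel {0..t} (\<lambda>s. pk k * U s k + dsym k * V s k + fcoeff f k * g s) \<and>
     U t k = a k + (LINT s:{0..t}|lborel. pk k * U s k + dsym k * V s k + fcoeff f k * g s)"
    "set_integrable lborel {0..t} (\<lambda>s. sk k * V s k + dsym k * U s k) \<and>
     V t k = b k + (LINT s:{0..t}|lborel. sk k * V s k + dsym k * U s k)"
  using assms unfolding is_solution_def pk_def sk_def by blast+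

lemma sol_fold:
  assumes "\<And>k. continuous_on {0..T} (\<lambda>t. U t k)" "\<And>k. continuous_on {0..T} (\<lambda>t. V t k)"
    "\<And>k t. t \<in> {0..T} \<Longrightarrow> set_integrable lborel {0..t} (\<lambda>s. pk k * U s k + dsym k * V s k + fcoeff f k * g s) \<and>
     U t k = a k + (LINT s:{0..t}|lborel. pk k * U s k + dsym k * V s k + fcoeff f k * g s)"
    "\<And>k t. t \<in> {0..T} \<Longrightarrow> set_integrable lborel {0..t} (\<lambda>s. sk k * V s k + dsym k * U s k) \<and>
     V t k = b k + (LINT s:{0..t}|lborel. sk k * V s k + dsym k * U s k)"
  shows "is_solution T f g a b U V"
  using assms unfolding is_solution_def pk_def sk_def by blast


lemma uniq_mode:
  assumes g: "set_integrable lborel {0..T} g" and sol: "is_solution T f g a b U V"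
    and k: "k \<noteq> 0" and T: "0 \<le> T"
  shows "U T k + cnj (theta sg k) * V T k = Ez g (cnj (lam sg k)) (gam a b sg k) (fcoeff f k) T"
proof -
  have T': "T \<in> {0..T}" using T by simp
  have uc: "continuous_on {0..T} (\<lambda>t. U t k)" using sol unfolding is_solution_def by blast
  have vc: "continuous_on {0..T} (\<lambda>t. V t k)" using sol unfolding is_solution_def by blast
  have hu: "\<And>t. t \<in> {0..T} \<Longrightarrow> set_integrable lborel {0..t} (\<lambda>s. pk k * U s k + dsym k * V s k + fcoeff f k * g s) \<and>
     U t k = a k + (LINT s:{0..t}|lborel. pk k * U s k + dsym k * V s k + fcoeff f k * g s)"
    using sol_unfold(3)[OF sol] by blast
  have hv: "\<And>t. t \<in> {0..T} \<Longrightarrow> set_integrable lborel {0..t} (\<lambda>s. sk k * V s k + dsym k * U s k) \<and>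
     V t k = b k + (LINT s:{0..t}|lborel. sk k * V s k + dsym k * U s k)"
    using sol_unfold(4)[OF sol] by blast
  have E1: "pk k + cnj (theta sg k) * dsym k = cnj (lam sg k)" using eig1[OF k] unfolding pk_def .
  have E2: "dsym k + cnj (theta sg k) * sk k = cnj (lam sg k) * cnj (theta sg k)" using eig2[OF k] unfolding sk_def .
  show ?thesis unfolding gam_def by (rule combo[OF g uc vc hu hv E1 E2 T'])
qed

lemma uniq_0:
  assumes g: "set_integrable lborel {0..T} g" and sol: "is_solution T f g a b U V"
    and T: "0 \<le> T" and b0: "b 0 = 0"
  shows "U T 0 = Ez g 0 (a 0) (fcoeff f 0) T" and "V T 0 = 0"
proof -
  have T': "T \<in> {0..T}" using T by simp
  have uc: "continuous_on {0..T} (\<lambda>t. U t 0)" using sol unfolding is_solution_def by blast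
  have vc: "continuous_on {0..T} (\<lambda>t. V t 0)" using sol unfolding is_solution_def by blast
  have hu: "\<And>t. t \<in> {0..T} \<Longrightarrow> set_integrable lborel {0..t} (\<lambda>s. pk 0 * U s 0 + dsym 0 * V s 0 + fcoeff f 0 * g s) \<and>
     U t 0 = a 0 + (LINT s:{0..t}|lborel. pk 0 * U s 0 + dsym 0 * V s 0 + fcoeff f 0 * g s)"
    using sol_unfold(3)[OF sol] by blast
  have hv: "\<And>t. t \<in> {0..T} \<Longrightarrow> set_integrable lborel {0..t} (\<lambda>s. sk 0 * V s 0 + dsym 0 * U s 0) \<and>
     V t 0 = b 0 + (LINT s:{0..t}|lborel. sk 0 * V s 0 + dsym 0 * U s 0)"
    using sol_unfold(4)[OF sol] by blast
  have E1: "pk 0 + 0 * dsym 0 = pk 0" by simp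
  have E2: "dsym 0 + 0 * sk 0 = pk 0 * 0" by (simp add: dsym_def)
  have "U T 0 + 0 * V T 0 = Ez g (pk 0) (a 0 + 0 * b 0) (fcoeff f 0) T"
    by (rule combo[OF g uc vc hu hv E1 E2 T'])
  moreover have "pk 0 = 0" by (simp add: pk_def dsym_def)
  ultimately show "U T 0 = Ez g 0 (a 0) (fcoeff f 0) T" by simp
  have "V T 0 = b 0 + (LINT s:{0..T}|lborel. sk 0 * V s 0 + dsym 0 * U s 0)" using hv[OF T'] by blast
  then show "V T 0 = 0" using b0 by (simp add: sk_def dsym_def)
qed


lemma exist_sol:
  fixes g :: "real \<Rightarrow> complex"
  assumes g: "set_integrable lborel {0..T} g" and b0: "b 0 = 0"
  shows "\<exists>U V. is_solution T f g a b U V"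
proof -
  define c1 where "c1 k = cnj (theta True k)" for k
  define c2 where "c2 k = cnj (theta False k)" for k
  define m1 where "m1 k = cnj (lam True k)" for k
  define m2 where "m2 k = cnj (lam False k)" for k
  define z1 where "z1 k = Ez g (m1 k) (a k + c1 k * b k) (fcoeff f k)" for k
  define z2 where "z2 k = Ez g (m2 k) (a k + c2 k * b k) (fcoeff f k)" for k
  define Ve where "Ve t k = (if k = 0 then 0 else (z1 k t - z2 k t) / (c1 k - c2 k))" for t k
  define Ue where "Ue t k = (if k = 0 then Ez g 0 (a 0) (fcoeff f 0) t
      else z1 k t - c1 k * ((z1 k t - z2 k t) / (c1 k - c2 k)))" for t k
  have CE: "continuous_on {0..T} (\<lambda>t. Ue t k) \<and> continuous_on {0..T} (\<lambda>t. Ve t k) \<and>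
     (\<forall>t\<in>{0..T}. (set_integrable lborel {0..t} (\<lambda>s. pk k * Ue s k + dsym k * Ve s k + fcoeff f k * g s) \<and>
     Ue t k = a k + (LINT s:{0..t}|lborel. pk k * Ue s k + dsym k * Ve s k + fcoeff f k * g s)) \<and>
     (set_integrable lborel {0..t} (\<lambda>s. sk k * Ve s k + dsym k * Ue s k) \<and>
     Ve t k = b k + (LINT s:{0..t}|lborel. sk k * Ve s k + dsym k * Ue s k)))" for k
  proof (cases "k = 0")
    case True
    have c: "continuous_on {0..T} (\<lambda>t. Ue t k)" unfolding Ue_def using True Ez_cont[OF g] by simp
    have c': "continuous_on {0..T} (\<lambda>t. Ve t k)" unfolding Ve_def using True by simp
    have i: "set_integrable lborel {0..t} (\<lambda>s. pk k * Ue s k + dsym k * Ve s k + fcoeff f k * g s) \<and>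
     Ue t k = a k + (LINT s:{0..t}|lborel. pk k * Ue s k + dsym k * Ve s k + fcoeff f k * g s)" if t: "t \<in> {0..T}" for t
      using Ez_sol[OF g t, of 0 "a 0" "fcoeff f 0"] True unfolding Ue_def Ve_def by (simp add: pk_def dsym_def)
    have j: "set_integrable lborel {0..t} (\<lambda>s. sk k * Ve s k + dsym k * Ue s k) \<and>
     Ve t k = b k + (LINT s:{0..t}|lborel. sk k * Ve s k + dsym k * Ue s k)" for t
      using True b0 unfolding Ue_def Ve_def
      by (simp add: sk_def dsym_def set_integrable_def set_lebesgue_integral_def)
    show ?thesis using c c' i j by blast
  next
    case False
    have E1T: "pk k + c1 k * dsym k = m1 k" unfolding c1_def m1_def pk_def by (rule eig1[OF False])
    have E1F: "pk k + c2 k * dsym k = m2 k" unfolding c2_def m2_def pk_def by (rule eig1[OF False])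
    have E2T: "dsym k + c1 k * sk k = m1 k * c1 k" unfolding c1_def m1_def sk_def by (rule eig2[OF False])
    have E2F: "dsym k + c2 k * sk k = m2 k * c2 k" unfolding c2_def m2_def sk_def by (rule eig2[OF False])
    have Tr: "m1 k + m2 k = pk k + sk k" unfolding m1_def m2_def pk_def sk_def by (rule eig_tr)
    have ne: "c1 k \<noteq> c2 k" unfolding c1_def c2_def by (rule theta_ne[OF False])
    note R = combo_exist[OF g E1T E2T E1F E2F Tr ne, where ain="a k" and bin="b k" and fc="fcoeff f k"]
    have eU: "Ue t k = z1 k t - c1 k * ((z1 k t - z2 k t) / (c1 k - c2 k))" for t
      unfolding Ue_def using False by simp
    have eV: "Ve t k = (z1 k t - z2 k t) / (c1 k - c2 k)" for t
      unfolding Ve_def using False by simp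
    show ?thesis unfolding eU eV z1_def z2_def
      apply (rule conjI, rule R(1))
      apply (rule conjI, rule R(2))
      apply (rule ballI, rule conjI)
       apply (erule R(3))
      apply (erule R(4))
      done
  qed
  have "is_solution T f g a b Ue Ve"
  proof (rule sol_fold)
    fix k
    show "continuous_on {0..T} (\<lambda>t. Ue t k)" using CE[of k] by (rule conjunct1)
    show "continuous_on {0..T} (\<lambda>t. Ve t k)" using CE[of k] by (rule conjunct2[THEN conjunct1])
    fix t assume t: "t \<in> {0..T}"
    note C = bspec[OF CE[of k, THEN conjunct2, THEN conjunct2] t]
    show "set_integrable lborel {0..t} (\<lambda>s. pk k * Ue s k + dsym k * Ve s k + fcoeff f k * g s) \<and>
     Ue t k = a k + (LINT s:{0..t}|lborel. pk k * Ue s k + dsym k * Ve s k + fcoeff f k * g s)"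
      using C by (rule conjunct1)
    show "set_integrable lborel {0..t} (\<lambda>s. sk k * Ve s k + dsym k * Ue s k) \<and>
     Ve t k = b k + (LINT s:{0..t}|lborel. sk k * Ve s k + dsym k * Ue s k)"
      using C by (rule conjunct2)
  qed
  then show ?thesis by blast
qed


lemma key:
  fixes g f :: "real \<Rightarrow> complex"
  assumes g: "set_integrable lborel {0..T} g" and b0: "b 0 = 0" and T: "0 \<le> T"
  shows "(\<forall>U V. is_solution T f g a b U V \<longrightarrow> U T = (\<lambda>k. 0) \<and> V T = (\<lambda>k. 0))
    \<longleftrightarrow> ((\<forall>k sg. k \<noteq> 0 \<longrightarrow>
             fcoeff f k * (LINT t:{-T/2..T/2}|lborel.
                 exp (- cnj (lam sg k) * of_real t) * g (t + T/2))
             = - exp (cnj (lam sg k) * of_real (T/2)) * gam a b sg k) \<and>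
          fcoeff f 0 * (LINT t:{-T/2..T/2}|lborel. g (t + T/2)) = - a 0)"
proof
  assume L: "\<forall>U V. is_solution T f g a b U V \<longrightarrow> U T = (\<lambda>k. 0) \<and> V T = (\<lambda>k. 0)"
  obtain Ue Ve where S: "is_solution T f g a b Ue Ve" using exist_sol[where f=f and a=a and b=b and g=g and T=T, OF g b0] by blast
  have Z: "Ue T = (\<lambda>k. 0)" "Ve T = (\<lambda>k. 0)" using L S by auto
  show "(\<forall>k sg. k \<noteq> 0 \<longrightarrow>
             fcoeff f k * (LINT t:{-T/2..T/2}|lborel.
                 exp (- cnj (lam sg k) * of_real t) * g (t + T/2))
             = - exp (cnj (lam sg k) * of_real (T/2)) * gam a b sg k) \<and>
          fcoeff f 0 * (LINT t:{-T/2..T/2}|lborel. g (t + T/2)) = - a 0"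
  proof (intro conjI allI impI)
    fix k :: int and sg assume k: "k \<noteq> 0"
    have "Ez g (cnj (lam sg k)) (gam a b sg k) (fcoeff f k) T = 0"
      using uniq_mode[OF g S k T, of sg] fun_cong[OF Z(1), of k] fun_cong[OF Z(2), of k] by simp
    then show "fcoeff f k * (LINT t:{-T/2..T/2}|lborel.
                 exp (- cnj (lam sg k) * of_real t) * g (t + T/2))
             = - exp (cnj (lam sg k) * of_real (T/2)) * gam a b sg k"
      by (rule mom_iff[THEN iffD2])
  next
    have "Ez g 0 (a 0) (fcoeff f 0) T = 0"
      using uniq_0(1)[OF g S T b0] fun_cong[OF Z(1), of 0] by simp
    then show "fcoeff f 0 * (LINT t:{-T/2..T/2}|lborel. g (t + T/2)) = - a 0"
      by (rule mom0_iff[THEN iffD2])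
  qed
next
  assume R: "(\<forall>k sg. k \<noteq> 0 \<longrightarrow>
             fcoeff f k * (LINT t:{-T/2..T/2}|lborel.
                 exp (- cnj (lam sg k) * of_real t) * g (t + T/2))
             = - exp (cnj (lam sg k) * of_real (T/2)) * gam a b sg k) \<and>
          fcoeff f 0 * (LINT t:{-T/2..T/2}|lborel. g (t + T/2)) = - a 0"
  show "\<forall>U V. is_solution T f g a b U V \<longrightarrow> U T = (\<lambda>k. 0) \<and> V T = (\<lambda>k. 0)"
  proof (intro allI impI)
    fix U V assume S: "is_solution T f g a b U V"
    have "U T k = 0 \<and> V T k = 0" for k
    proof (cases "k = 0")
      case True
      have "Ez g 0 (a 0) (fcoeff f 0) T = 0" using R by (intro mom0_iff[THEN iffD1]) blast
      then show ?thesis using True uniq_0[OF g S T b0] by simp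
    next
      case False
      have m: "Ez g (cnj (lam sg k)) (gam a b sg k) (fcoeff f k) T = 0" for sg
        using R False by (intro mom_iff[THEN iffD1]) blast
      have e1: "U T k + cnj (theta True k) * V T k = 0" using uniq_mode[OF g S False T, of True] m[of True] by simp
      have e2: "U T k + cnj (theta False k) * V T k = 0" using uniq_mode[OF g S False T, of False] m[of False] by simp
      have "(cnj (theta True k) - cnj (theta False k)) * V T k
          = (U T k + cnj (theta True k) * V T k) - (U T k + cnj (theta False k) * V T k)"
        by (simp add: algebra_simps)
      also have "\<dots> = 0" using e1 e2 by simp
      finally have "(cnj (theta True k) - cnj (theta False k)) * V T k = 0" .
      then have v: "V T k = 0" using theta_ne[OF False] by simp
      then show ?thesis using e1 by simp
    qed
    then show "U T = (\<lambda>k. 0) \<and> V T = (\<lambda>k. 0)" by auto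
  qed
qed

theorem lemma4p1:
  fixes T :: real
  assumes "T > 0"
  shows
   "(\<forall>a b. dual_Hper 2 a \<and> dual_Hper 1 b \<and> b 0 = 0 \<longrightarrow>
       (\<exists>f g. L2_on {0<..<2*pi} f \<and> L2_on {0<..<T} g \<and>
          (\<forall>U V. is_solution T f g a b U V \<longrightarrow> U T = (\<lambda>k. 0) \<and> V T = (\<lambda>k. 0))))
    \<longleftrightarrow>
    (\<forall>a b. dual_Hper 2 a \<and> dual_Hper 1 b \<and> b 0 = 0 \<longrightarrow>
       (\<exists>f g. L2_on {0<..<2*pi} f \<and> L2_on {0<..<T} g \<and>
          (\<forall>k sg. k \<noteq> 0 \<longrightarrow>
             fcoeff f k * (LINT t:{-T/2..T/2}|lborel.
                 exp (- cnj (lam sg k) * of_real t) * g (t + T/2))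
             = - exp (cnj (lam sg k) * of_real (T/2)) * gam a b sg k) \<and>
          fcoeff f 0 * (LINT t:{-T/2..T/2}|lborel. g (t + T/2)) = - a 0))"
proof -
  have T: "0 \<le> T" using assms by simp
  have K: "\<And>a b f g. b 0 = 0 \<Longrightarrow> L2_on {0<..<T} g \<Longrightarrow>
    (\<forall>U V. is_solution T f g a b U V \<longrightarrow> U T = (\<lambda>k. 0) \<and> V T = (\<lambda>k. 0))
    \<longleftrightarrow> ((\<forall>k sg. k \<noteq> 0 \<longrightarrow>
             fcoeff f k * (LINT t:{-T/2..T/2}|lborel.
                 exp (- cnj (lam sg k) * of_real t) * g (t + T/2))
             = - exp (cnj (lam sg k) * of_real (T/2)) * gam a b sg k) \<and>
          fcoeff f 0 * (LINT t:{-T/2..T/2}|lborel. g (t + T/2)) = - a 0)"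
    by (rule key[OF L2_int _ T])
  show ?thesis
  proof
    assume H: "\<forall>a b. dual_Hper 2 a \<and> dual_Hper 1 b \<and> b 0 = 0 \<longrightarrow>
       (\<exists>f g. L2_on {0<..<2*pi} f \<and> L2_on {0<..<T} g \<and>
          (\<forall>U V. is_solution T f g a b U V \<longrightarrow> U T = (\<lambda>k. 0) \<and> V T = (\<lambda>k. 0)))"
    show "\<forall>a b. dual_Hper 2 a \<and> dual_Hper 1 b \<and> b 0 = 0 \<longrightarrow>
       (\<exists>f g. L2_on {0<..<2*pi} f \<and> L2_on {0<..<T} g \<and>
          (\<forall>k sg. k \<noteq> 0 \<longrightarrow>
             fcoeff f k * (LINT t:{-T/2..T/2}|lborel.
                 exp (- cnj (lam sg k) * of_real t) * g (t + T/2))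
             = - exp (cnj (lam sg k) * of_real (T/2)) * gam a b sg k) \<and>
          fcoeff f 0 * (LINT t:{-T/2..T/2}|lborel. g (t + T/2)) = - a 0)"
    proof (intro allI impI)
      fix a b assume P: "dual_Hper 2 a \<and> dual_Hper 1 b \<and> b 0 = (0::complex)"
      obtain f g where fg: "L2_on {0<..<2*pi} f \<and> L2_on {0<..<T} g \<and> (\<forall>U V. is_solution T f g a b U V \<longrightarrow> U T = (\<lambda>k. 0) \<and> V T = (\<lambda>k. 0))"
        using mp[OF spec[OF spec[OF H, of a], of b] P] by (elim exE)
      note f = conjunct1[OF fg] and g = conjunct1[OF conjunct2[OF fg]] and X = conjunct2[OF conjunct2[OF fg]]
      have b0: "b 0 = 0" using P by (elim conjE)
      show "\<exists>f g. L2_on {0<..<2*pi} f \<and> L2_on {0<..<T} g \<and>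
          (\<forall>k sg. k \<noteq> 0 \<longrightarrow>
             fcoeff f k * (LINT t:{-T/2..T/2}|lborel.
                 exp (- cnj (lam sg k) * of_real t) * g (t + T/2))
             = - exp (cnj (lam sg k) * of_real (T/2)) * gam a b sg k) \<and>
          fcoeff f 0 * (LINT t:{-T/2..T/2}|lborel. g (t + T/2)) = - a 0"
        apply (rule exI[of _ f])
        apply (rule exI[of _ g])
        apply (rule conjI[OF f])
        apply (rule conjI[OF g])
        apply (rule iffD1[OF K[where a=a and b=b and f=f and g=g, OF b0 g] X])
        done
    qed
  next
    assume H: "\<forall>a b. dual_Hper 2 a \<and> dual_Hper 1 b \<and> b 0 = 0 \<longrightarrow>
       (\<exists>f g. L2_on {0<..<2*pi} f \<and> L2_on {0<..<T} g \<and>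
          (\<forall>k sg. k \<noteq> 0 \<longrightarrow>
             fcoeff f k * (LINT t:{-T/2..T/2}|lborel.
                 exp (- cnj (lam sg k) * of_real t) * g (t + T/2))
             = - exp (cnj (lam sg k) * of_real (T/2)) * gam a b sg k) \<and>
          fcoeff f 0 * (LINT t:{-T/2..T/2}|lborel. g (t + T/2)) = - a 0)"
    show "\<forall>a b. dual_Hper 2 a \<and> dual_Hper 1 b \<and> b 0 = 0 \<longrightarrow>
       (\<exists>f g. L2_on {0<..<2*pi} f \<and> L2_on {0<..<T} g \<and>
          (\<forall>U V. is_solution T f g a b U V \<longrightarrow> U T = (\<lambda>k. 0) \<and> V T = (\<lambda>k. 0)))"
    proof (intro allI impI)
      fix a b assume P: "dual_Hper 2 a \<and> dual_Hper 1 b \<and> b 0 = (0::complex)"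
      obtain f g where fg: "L2_on {0<..<2*pi} f \<and> L2_on {0<..<T} g \<and> ((\<forall>k sg. k \<noteq> 0 \<longrightarrow>
             fcoeff f k * (LINT t:{-T/2..T/2}|lborel.
                 exp (- cnj (lam sg k) * of_real t) * g (t + T/2))
             = - exp (cnj (lam sg k) * of_real (T/2)) * gam a b sg k) \<and>
          fcoeff f 0 * (LINT t:{-T/2..T/2}|lborel. g (t + T/2)) = - a 0)"
        using mp[OF spec[OF spec[OF H, of a], of b] P] by (elim exE)
      note f = conjunct1[OF fg] and g = conjunct1[OF conjunct2[OF fg]] and X = conjunct2[OF conjunct2[OF fg]]
      have b0: "b 0 = 0" using P by (elim conjE)
      show "\<exists>f g. L2_on {0<..<2*pi} f \<and> L2_on {0<..<T} g \<and>
          (\<forall>U V. is_solution T f g a b U V \<longrightarrow> U T = (\<lambda>k. 0) \<and> V T = (\<lambda>k. 0))"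
        apply (rule exI[of _ f])
        apply (rule exI[of _ g])
        apply (rule conjI[OF f])
        apply (rule conjI[OF g])
        apply (rule iffD2[OF K[where a=a and b=b and f=f and g=g, OF b0 g] X])
        done
    qed
  qed
qed

end
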